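(* Let $1\le d<\omega$, $2\le k<\omega$, and let $P$ be a $d$-dimensional $k$-template. Then $\chi(L(\mathbb R^d,P))^{+(d-1)}\ge 2^{\aleph_0}$.
   Context: A $d$-dimensional $k$-template is a set $P$ of $d$-tuples with $|P|=k$. If $P,Q$ are $d$-dimensional templates, $Q$ is a homomorphic image of $P$ if there is a surjection $f:P\to Q$ such that for all $x,y\in P$ and $i<d$, $x_i=y_i$ implies $f(x)_i=f(y)_i$. $L(\mathbb R^d,P)$ is the $k$-hypergraph with vertex set $\mathbb R^d$ whose edges are the $k$-templates $Q\subseteq\mathbb R^d$ that are homomorphic images of $P$. $\chi$ is the chromatic number (least cardinal number of colors in a vertex coloring not constant on any edge). $\kappa^+$ is the successor cardinal, $\kappa^{+0}=\kappa$, $\kappa^{+(n+1)}=(\kappa^{+n})^+$. *)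

theory Defs
  imports Complex_Main
begin

definition Rd :: "nat \<Rightarrow> real list set" where
  "Rd d = {x. length x = d}"

definition template :: "nat \<Rightarrow> nat \<Rightarrow> 'a list set \<Rightarrow> bool" where
  "template d k P \<longleftrightarrow> finite P \<and> card P = k \<and> (\<forall>x\<in>P. length x = d)"

definition hom_image :: "nat \<Rightarrow> 'a list set \<Rightarrow> 'b list set \<Rightarrow> bool" where
  "hom_image d P Q \<longleftrightarrow> (\<exists>f. f ` P = Q \<and>
      (\<forall>x\<in>P. \<forall>y\<in>P. \<forall>i<d. x ! i = y ! i \<longrightarrow> f x ! i = f y ! i))"

definition L_edges :: "nat \<Rightarrow> 'a list set \<Rightarrow> real list set set" where
  "L_edges d P = {Q. Q \<subseteq> Rd d \<and> template d (card P) Q \<and> hom_image d P Q}"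

definition proper_coloring :: "'v set set \<Rightarrow> ('v \<Rightarrow> 'c) \<Rightarrow> bool" where
  "proper_coloring E f \<longleftrightarrow> (\<forall>e\<in>E. \<not> (\<exists>c. \<forall>x\<in>e. f x = c))"

text \<open>Chromatic number of the hypergraph (V,E): the least cardinal |f ` V| over
  proper colourings f with colours from the type 'c (represented as a cardinal
  order relation on a subset of 'c).\<close>
definition chromatic_number :: "'v set \<Rightarrow> 'v set set \<Rightarrow> 'c rel" where
  "chromatic_number V E = (SOME r. (\<exists>f::'v \<Rightarrow> 'c. proper_coloring E f \<and> r = card_of (f ` V)) \<and>
       (\<forall>f::'v \<Rightarrow> 'c. proper_coloring E f \<longrightarrow> (r, card_of (f ` V)) \<in> ordLeq))"

text \<open>Cardinal successor realised inside the type 'a, capped at |UNIV::'a set|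
  (the successor is realised up to isomorphism if it fits into 'a, otherwise
  the cap |UNIV| is returned).\<close>
definition cardSuc_cap :: "'a rel \<Rightarrow> 'a rel" where
  "cardSuc_cap r = (if \<exists>s::'a rel. Card_order s \<and> (s, cardSuc r) \<in> ordIso
      then (SOME s::'a rel. Card_order s \<and> (s, cardSuc r) \<in> ordIso) else card_of (UNIV :: 'a set))"

definition cardSuc_iter :: "nat \<Rightarrow> 'a rel \<Rightarrow> 'a rel" where
  "cardSuc_iter n r = (cardSuc_cap ^^ n) r"

end

theory Submission
  imports Defs "HOL-Analysis.Abstract_Topology_2"
begin

unbundle cardinal_syntax

lemma pigeon:
  fixes h :: "'y \<Rightarrow> 't"
  assumes lt: "|T \<times> {..<m::nat}| <o |Y|" and hY: "h ` Y \<subseteq> T"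
  shows "\<exists>t\<in>T. \<exists>Z\<subseteq>Y. finite Z \<and> card Z = Suc m \<and> (\<forall>y\<in>Z. h y = t)"
proof (rule ccontr)
  assume H: "\<not> ?thesis"
  have H': "\<not> (Z \<subseteq> Y \<and> finite Z \<and> card Z = Suc m \<and> (\<forall>y\<in>Z. h y = t))" if "t \<in> T" for t Z
    using H that by blast
  have fib: "finite {y\<in>Y. h y = t} \<and> card {y\<in>Y. h y = t} \<le> m" if t: "t \<in> T" for t
  proof -
    let ?F = "{y\<in>Y. h y = t}"
    have fin: "finite ?F"
    proof (rule ccontr)
      assume "\<not> finite ?F"
      then obtain Z where Z: "finite Z" "card Z = Suc m" "Z \<subseteq> ?F"
        using infinite_arbitrarily_large by blast
      then have "Z \<subseteq> Y \<and> finite Z \<and> card Z = Suc m \<and> (\<forall>y\<in>Z. h y = t)" by blast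
      then show False using H'[OF t] by blast
    qed
    moreover have "card ?F \<le> m"
    proof (rule ccontr)
      assume "\<not> card ?F \<le> m"
      then have "Suc m \<le> card ?F" by simp
      then obtain Z where Z: "Z \<subseteq> ?F" "card Z = Suc m" "finite Z"
        by (rule obtain_subset_with_card_n)
      then have "Z \<subseteq> Y \<and> finite Z \<and> card Z = Suc m \<and> (\<forall>y\<in>Z. h y = t)" by blast
      then show False using H'[OF t] by blast
    qed
    ultimately show ?thesis by blast
  qed
  have iex: "\<exists>\<iota>. \<iota> ` {y\<in>Y. h y = t} \<subseteq> {..<m} \<and> inj_on \<iota> {y\<in>Y. h y = t}" if t: "t \<in> T" for t
  proof -
    have "card {y\<in>Y. h y = t} \<le> card {..<m}" using fib[OF t] by simp
    then show ?thesis using card_le_inj[of "{y\<in>Y. h y = t}" "{..<m}"] fib[OF t] by blast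
  qed
  then have "\<forall>t\<in>T. \<exists>\<iota>. \<iota> ` {y\<in>Y. h y = t} \<subseteq> {..<m} \<and> inj_on \<iota> {y\<in>Y. h y = t}" by blast
  from bchoice[OF this] obtain \<iota> where io: "\<forall>t\<in>T. \<iota> t ` {y\<in>Y. h y = t} \<subseteq> {..<m} \<and> inj_on (\<iota> t) {y\<in>Y. h y = t}"
    by blast
  define G where "G y = (h y, \<iota> (h y) y)" for y
  have "inj_on G Y"
  proof (rule inj_onI)
    fix x y assume xy: "x \<in> Y" "y \<in> Y" "G x = G y"
    then have e: "h x = h y" unfolding G_def by simp
    then have i1: "\<iota> (h x) x = \<iota> (h x) y" using xy(3) unfolding G_def by simp
    have hx: "h x \<in> T" using hY xy(1) by blast
    have inj: "inj_on (\<iota> (h x)) {z\<in>Y. h z = h x}" using io hx by blast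
    have "x \<in> {z\<in>Y. h z = h x}" "y \<in> {z\<in>Y. h z = h x}" using xy e by auto
    then show "x = y" using inj_onD[OF inj i1] by blast
  qed
  moreover have "G ` Y \<subseteq> T \<times> {..<m}"
  proof
    fix z assume "z \<in> G ` Y"
    then obtain y where y: "y \<in> Y" "z = G y" by blast
    have hy: "h y \<in> T" using hY y(1) by blast
    have "\<iota> (h y) y \<in> {..<m}" using io hy y(1) by blast
    then show "z \<in> T \<times> {..<m}" using y hy unfolding G_def by simp
  qed
  ultimately have "|Y| \<le>o |T \<times> {..<m}|" using card_of_ordLeq by blast
  then show False using lt not_ordLess_ordLeq by blast
qed

definition Wk :: "(nat \<Rightarrow> real set) \<Rightarrow> nat \<Rightarrow> nat \<Rightarrow> real set list set" where
  "Wk A k j = {Ss. length Ss = j \<and> (\<forall>i<j. Ss!i \<subseteq> A i \<and> finite (Ss!i) \<and> card (Ss!i) = k)}"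

definition boxl :: "'x set list \<Rightarrow> 'x list set" where
  "boxl Ss = {xs. length xs = length Ss \<and> (\<forall>i<length Ss. xs!i \<in> Ss!i)}"

lemma claim:
  fixes g :: "real list \<Rightarrow> 'c"
  assumes "\<forall>j<n. |(C \<times> Wk A (Suc m) j) \<times> {..<m}| <o |A j|"
    and "\<forall>xs. length xs = n \<and> (\<forall>i<n. xs!i \<in> A i) \<longrightarrow> g xs \<in> C"
  shows "\<exists>Ss c. Ss \<in> Wk A (Suc m) n \<and> c \<in> C \<and> (\<forall>xs\<in>boxl Ss. g xs = c)"
  using assms
proof (induction n arbitrary: g)
  case 0
  then show ?case
    by (intro exI[of _ "[]"] exI[of _ "g []"]) (auto simp: Wk_def boxl_def)
next
  case (Suc n)
  have "\<forall>y\<in>A n. \<exists>p. snd p \<in> Wk A (Suc m) n \<and> fst p \<in> C \<and> (\<forall>xs\<in>boxl (snd p). g (xs@[y]) = fst p)"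
  proof
    fix y assume y: "y \<in> A n"
    have "\<exists>Ss c. Ss \<in> Wk A (Suc m) n \<and> c \<in> C \<and> (\<forall>xs\<in>boxl Ss. g (xs@[y]) = c)"
    proof (rule Suc.IH)
      show "\<forall>j<n. |(C \<times> Wk A (Suc m) j) \<times> {..<m}| <o |A j|" using Suc.prems by simp
      show "\<forall>xs. length xs = n \<and> (\<forall>i<n. xs ! i \<in> A i) \<longrightarrow> g (xs @ [y]) \<in> C"
      proof (intro allI impI)
        fix xs assume xs: "length xs = n \<and> (\<forall>i<n. xs ! i \<in> A i)"
        have "\<forall>i<Suc n. (xs@[y]) ! i \<in> A i"
          using xs y by (auto simp: nth_append less_Suc_eq)
        then show "g (xs @ [y]) \<in> C" using Suc.prems(2) xs by auto
      qed
    qed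
    then show "\<exists>p. snd p \<in> Wk A (Suc m) n \<and> fst p \<in> C \<and> (\<forall>xs\<in>boxl (snd p). g (xs@[y]) = fst p)"
      by (metis fst_conv snd_conv)
  qed
  note hex = this
  obtain h where h: "\<forall>y\<in>A n. snd (h y) \<in> Wk A (Suc m) n \<and> fst (h y) \<in> C \<and> (\<forall>xs\<in>boxl (snd (h y)). g (xs@[y]) = fst (h y))"
    using bchoice[OF hex] by blast
  have "h y \<in> C \<times> Wk A (Suc m) n" if "y \<in> A n" for y using h that by (simp add: mem_Times_iff)
  then have "h ` A n \<subseteq> C \<times> Wk A (Suc m) n" by blast
  then obtain t Z where t: "t \<in> C \<times> Wk A (Suc m) n" and Z: "Z \<subseteq> A n" "finite Z" "card Z = Suc m"
      "\<forall>y\<in>Z. h y = t"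
    using pigeon[of "C \<times> Wk A (Suc m) n" m "A n" h] Suc.prems(1) by blast
  obtain c Ss where tcs: "t = (c, Ss)" by fastforce
  have W: "Ss @ [Z] \<in> Wk A (Suc m) (Suc n)"
    using t Z tcs by (auto simp: Wk_def nth_append less_Suc_eq)
  have B: "\<forall>xs\<in>boxl (Ss @ [Z]). g xs = c"
  proof
    fix xs assume xs: "xs \<in> boxl (Ss @ [Z])"
    have lSs: "length Ss = n" using t tcs by (simp add: Wk_def)
    have ne: "xs \<noteq> []" using xs by (auto simp: boxl_def)
    have lx: "length xs = Suc n" using xs lSs by (simp add: boxl_def)
    have "xs ! n \<in> (Ss@[Z]) ! n" using xs lSs by (simp add: boxl_def)
    then have yZ: "last xs \<in> Z" using lSs lx ne nth_append_length[of Ss Z "[]"] by (simp add: last_conv_nth)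
    have bx: "butlast xs \<in> boxl Ss"
      unfolding boxl_def
    proof (intro CollectI conjI allI impI)
      show "length (butlast xs) = length Ss" using lx lSs by simp
      fix i assume i: "i < length Ss"
      then have "xs!i \<in> (Ss@[Z])!i" using xs by (auto simp: boxl_def)
      then show "butlast xs ! i \<in> Ss!i" using i lx lSs by (simp add: nth_butlast nth_append)
    qed
    have "h (last xs) = (c, Ss)" using Z yZ tcs by auto
    then have "g (butlast xs @ [last xs]) = c" using h Z yZ bx by force
    then show "g xs = c" using ne by simp
  qed
  show ?case using W B t tcs by blast
qed


lemma edge_in_box:
  fixes P :: "'a list set"
  assumes tP: "template d k P" and Ss: "Ss \<in> Wk A k d"
  shows "\<exists>Q\<in>L_edges d P. Q \<subseteq> boxl Ss"
proof -
  have fP: "finite P" and cP: "card P = k" and lP: "\<forall>x\<in>P. length x = d"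
    using tP by (auto simp: template_def)
  have lS: "length Ss = d" and S: "\<forall>i<d. Ss!i \<subseteq> A i \<and> finite (Ss!i) \<and> card (Ss!i) = k"
    using Ss by (auto simp: Wk_def)
  have "\<forall>i. \<exists>\<phi>. i < d \<longrightarrow> (\<phi> ` ((\<lambda>x. x!i) ` P) \<subseteq> Ss!i \<and> inj_on \<phi> ((\<lambda>x. x!i) ` P))"
  proof
    fix i
    show "\<exists>\<phi>. i < d \<longrightarrow> (\<phi> ` ((\<lambda>x. x!i) ` P) \<subseteq> Ss!i \<and> inj_on \<phi> ((\<lambda>x. x!i) ` P))"
    proof (cases "i < d")
      case i: True
      have "card ((\<lambda>x. x!i) ` P) \<le> card (Ss!i)"
        using card_image_le[OF fP, of "\<lambda>x. x!i"] cP S i by simp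
      then have "\<exists>\<phi>. \<phi> ` ((\<lambda>x. x!i) ` P) \<subseteq> Ss!i \<and> inj_on \<phi> ((\<lambda>x. x!i) ` P)"
        using card_le_inj[of "(\<lambda>x. x!i) ` P" "Ss!i"] fP S i by blast
      then show ?thesis by blast
    qed simp
  qed
  then have "\<exists>\<phi>. \<forall>i. i < d \<longrightarrow> (\<phi> i ` ((\<lambda>x. x!i) ` P) \<subseteq> Ss!i \<and> inj_on (\<phi> i) ((\<lambda>x. x!i) ` P))"
    by (rule choice)
  then obtain \<phi> where phi: "\<forall>i<d. \<phi> i ` ((\<lambda>x. x!i) ` P) \<subseteq> Ss!i \<and> inj_on (\<phi> i) ((\<lambda>x. x!i) ` P)"
    by blast
  define F where "F x = map (\<lambda>i. \<phi> i (x!i)) [0..<d]" for x :: "'a list"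
  have Fn: "F x ! i = \<phi> i (x!i)" if "i < d" for x i using that by (simp add: F_def)
  have lF: "length (F x) = d" for x by (simp add: F_def)
  have inj: "inj_on F P"
  proof (rule inj_onI)
    fix x y assume xy: "x \<in> P" "y \<in> P" "F x = F y"
    show "x = y"
    proof (rule nth_equalityI)
      show "length x = length y" using xy lP by simp
      fix i assume "i < length x"
      then have i: "i < d" using xy lP by simp
      from xy(3) have "F x ! i = F y ! i" by simp
      then have "\<phi> i (x!i) = \<phi> i (y!i)" by (simp add: Fn[OF i])
      moreover have "inj_on (\<phi> i) ((\<lambda>x. x!i) ` P)" using phi i by blast
      ultimately show "x!i = y!i" using xy by (auto dest: inj_onD)
    qed
  qed
  have "F ` P \<in> L_edges d P"
    unfolding L_edges_def template_def hom_image_def Rd_def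
  proof (intro CollectI conjI)
    show "F ` P \<subseteq> {x. length x = d}" using lF by auto
    show "finite (F ` P)" using fP by simp
    show "card (F ` P) = card P" using card_image[OF inj] .
    show "\<forall>x\<in>F ` P. length x = d" using lF by auto
    show "\<exists>f. f ` P = F ` P \<and> (\<forall>x\<in>P. \<forall>y\<in>P. \<forall>i<d. x ! i = y ! i \<longrightarrow> f x ! i = f y ! i)"
      using Fn by (intro exI[of _ F]) auto
  qed
  moreover have "F ` P \<subseteq> boxl Ss"
  proof
    fix z assume "z \<in> F ` P"
    then obtain x where x: "x \<in> P" "z = F x" by blast
    have "\<forall>i<d. z ! i \<in> Ss ! i"
    proof (intro allI impI)
      fix i assume i: "i < d"
      have "\<phi> i (x!i) \<in> Ss!i" using phi x(1) i by blast
      then show "z ! i \<in> Ss ! i" using x(2) Fn[OF i] by simp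
    qed
    then show "z \<in> boxl Ss" using lS x lF by (simp add: boxl_def)
  qed
  ultimately show ?thesis by blast
qed

lemma no_good_A:
  fixes f :: "real list \<Rightarrow> 'c" and A :: "nat \<Rightarrow> real set" and P :: "'a list set"
  assumes tP: "template d (Suc m) P" and pr: "proper_coloring (L_edges d P) f"
    and hyp: "\<forall>j<d. |(f ` Rd d \<times> Wk A (Suc m) j) \<times> {..<m}| <o |A j|"
  shows False
proof -
  obtain Ss c where Ss: "Ss \<in> Wk A (Suc m) d" "c \<in> f ` Rd d" "\<forall>xs\<in>boxl Ss. f xs = c"
  proof -
    have h2: "\<forall>xs. length xs = d \<and> (\<forall>i<d. xs!i \<in> A i) \<longrightarrow> f xs \<in> f ` Rd d"
      by (auto simp: Rd_def)
    show ?thesis using claim[OF hyp h2] that by blast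
  qed
  obtain Q where Q: "Q \<in> L_edges d P" "Q \<subseteq> boxl Ss" using edge_in_box[OF tP Ss(1)] by blast
  then have "\<exists>c. \<forall>x\<in>Q. f x = c" using Ss(3) by blast
  then show False using pr Q unfolding proper_coloring_def by blast
qed

lemma finite_card_ordLess: "finite X \<Longrightarrow> finite Y \<Longrightarrow> card X < card Y \<Longrightarrow> |X| <o |Y|"
proof (rule ccontr)
  assume fin: "finite X" "finite Y" "card X < card Y" and "\<not> |X| <o |Y|"
  then have "|Y| \<le>o |X|" using not_ordLess_iff_ordLeq[OF card_of_Well_order card_of_Well_order] by blast
  then have "\<exists>h. inj_on h Y \<and> h ` Y \<subseteq> X" by (simp add: card_of_ordLeq[symmetric])
  then obtain h where "inj_on h Y" "h ` Y \<subseteq> X" by blast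
  then have "card Y \<le> card X" using card_inj_on_le fin by blast
  then show False using fin by simp
qed

lemma fin_le_inf:
  assumes "finite X" "\<not> finite (Field r)" "Card_order r"
  shows "|X| \<le>o r"
proof -
  have w: "Well_order r" using assms(3) card_order_on_well_order_on by blast
  have "|X| <o r" using finite_ordLess_infinite[of "|X|" r, OF card_of_Well_order w] assms
    by (simp add: Field_card_of)
  then show ?thesis by (rule ordLess_imp_ordLeq)
qed

lemma lists_bound:
  assumes inf: "\<not> finite (Field r)" and cr: "Card_order r" and X: "|X| \<le>o r"
  shows "|{xs. length xs = n \<and> set xs \<subseteq> X}| \<le>o r"
proof (induction n)
  case 0
  have "{xs. length xs = 0 \<and> set xs \<subseteq> X} = {[]}" by auto
  then show ?case using fin_le_inf[of "{[]}" r] inf cr by simp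
next
  case (Suc n)
  let ?L = "{xs. length xs = n \<and> set xs \<subseteq> X}"
  have 1: "|X \<times> ?L| \<le>o r" using card_of_Times_ordLeq_infinite_Field[OF inf X Suc.IH cr] .
  have "inj_on (\<lambda>xs. (hd xs, tl xs)) {xs. length xs = Suc n \<and> set xs \<subseteq> X}"
  proof (rule inj_onI)
    fix x y assume "x \<in> {xs. length xs = Suc n \<and> set xs \<subseteq> X}" "y \<in> {xs. length xs = Suc n \<and> set xs \<subseteq> X}"
      "(hd x, tl x) = (hd y, tl y)"
    then show "x = y" by (cases x; cases y) auto
  qed
  moreover have "(\<lambda>xs. (hd xs, tl xs)) ` {xs. length xs = Suc n \<and> set xs \<subseteq> X} \<subseteq> X \<times> ?L"
  proof
    fix z assume "z \<in> (\<lambda>xs. (hd xs, tl xs)) ` {xs. length xs = Suc n \<and> set xs \<subseteq> X}"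
    then obtain xs where "length xs = Suc n" "set xs \<subseteq> X" "z = (hd xs, tl xs)" by blast
    then show "z \<in> X \<times> ?L" by (cases xs) auto
  qed
  ultimately have "|{xs. length xs = Suc n \<and> set xs \<subseteq> X}| \<le>o |X \<times> ?L|"
    using card_of_ordLeq by blast
  then show ?case using 1 ordLeq_transitive by blast
qed





lemma cap_Card: "Card_order (cardSuc_cap (r::'a rel))"
proof (cases "\<exists>s::'a rel. Card_order s \<and> (s, cardSuc r) \<in> ordIso")
  case True
  then have "Card_order (SOME s::'a rel. Card_order s \<and> (s, cardSuc r) \<in> ordIso) \<and>
      ((SOME s::'a rel. Card_order s \<and> (s, cardSuc r) \<in> ordIso), cardSuc r) \<in> ordIso"
    by (rule someI_ex[of "\<lambda>s. Card_order s \<and> (s, cardSuc r) \<in> ordIso"])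
  moreover have "cardSuc_cap r = (SOME s::'a rel. Card_order s \<and> (s, cardSuc r) \<in> ordIso)"
    unfolding cardSuc_cap_def using True by (rule if_P)
  ultimately show ?thesis by simp
next
  case False
  have "cardSuc_cap r = |UNIV :: 'a set|"
    unfolding cardSuc_cap_def using False by (rule if_not_P)
  then show ?thesis by (simp add: card_of_Card_order)
qed

lemma cap_ge:
  assumes cr: "Card_order (r::'a rel)" shows "r \<le>o cardSuc_cap r"
proof (cases "\<exists>s::'a rel. Card_order s \<and> (s, cardSuc r) \<in> ordIso")
  case True
  then have s: "Card_order (SOME s::'a rel. Card_order s \<and> (s, cardSuc r) \<in> ordIso) \<and>
      ((SOME s::'a rel. Card_order s \<and> (s, cardSuc r) \<in> ordIso), cardSuc r) \<in> ordIso"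
    by (rule someI_ex[of "\<lambda>s. Card_order s \<and> (s, cardSuc r) \<in> ordIso"])
  have "r \<le>o cardSuc r" using cardSuc_ordLeq[OF cr] .
  then have "r \<le>o (SOME s::'a rel. Card_order s \<and> (s, cardSuc r) \<in> ordIso)"
    using s ordLeq_ordIso_trans ordIso_symmetric by blast
  moreover have "cardSuc_cap r = (SOME s::'a rel. Card_order s \<and> (s, cardSuc r) \<in> ordIso)"
    unfolding cardSuc_cap_def using True by (rule if_P)
  ultimately show ?thesis by simp
next
  case False
  have "r =o |Field r|" using card_of_Field_ordIso[OF cr] ordIso_symmetric by blast
  moreover have "|Field r| \<le>o |UNIV :: 'a set|" by (rule card_of_mono1) simp
  ultimately have "r \<le>o |UNIV :: 'a set|" using ordIso_ordLeq_trans by blast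
  moreover have "cardSuc_cap r = |UNIV :: 'a set|"
    unfolding cardSuc_cap_def using False by (rule if_not_P)
  ultimately show ?thesis by simp
qed

lemma cap_suc:
  assumes cr: "Card_order (r::'a rel)" and ne: "cardSuc_cap r \<noteq> |UNIV :: 'a set|"
  shows "cardSuc r \<le>o cardSuc_cap r"
proof (cases "\<exists>s::'a rel. Card_order s \<and> (s, cardSuc r) \<in> ordIso")
  case True
  then have s: "Card_order (SOME s::'a rel. Card_order s \<and> (s, cardSuc r) \<in> ordIso) \<and>
      ((SOME s::'a rel. Card_order s \<and> (s, cardSuc r) \<in> ordIso), cardSuc r) \<in> ordIso"
    by (rule someI_ex[of "\<lambda>s. Card_order s \<and> (s, cardSuc r) \<in> ordIso"])
  then have "cardSuc r \<le>o (SOME s::'a rel. Card_order s \<and> (s, cardSuc r) \<in> ordIso)"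
    using ordIso_symmetric ordIso_iff_ordLeq by blast
  moreover have "cardSuc_cap r = (SOME s::'a rel. Card_order s \<and> (s, cardSuc r) \<in> ordIso)"
    unfolding cardSuc_cap_def using True by (rule if_P)
  ultimately show ?thesis by simp
next
  case False
  have "cardSuc_cap r = |UNIV :: 'a set|"
    unfolding cardSuc_cap_def using False by (rule if_not_P)
  then show ?thesis using ne by simp
qed

lemma iter_Suc: "cardSuc_iter (Suc j) r = cardSuc_cap (cardSuc_iter j r)"
  by (simp add: cardSuc_iter_def)

lemma iter_0: "cardSuc_iter 0 r = r"
  by (simp add: cardSuc_iter_def)

lemma iter_Card: "Card_order r \<Longrightarrow> Card_order (cardSuc_iter j r)"
  by (cases j) (simp_all add: iter_Suc iter_0 cap_Card)

lemma iter_mono: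
  assumes cr: "Card_order r"
  shows "i \<le> j \<Longrightarrow> cardSuc_iter i r \<le>o cardSuc_iter j r"
proof (induction j)
  case 0
  have "Well_order r" using cr card_order_on_well_order_on by blast
  then show ?case using 0 ordLeq_reflexive by (simp add: iter_0)
next
  case (Suc j)
  show ?case
  proof (cases "i = Suc j")
    case True
    then show ?thesis using iter_Card[OF cr, of i] card_order_on_well_order_on ordLeq_reflexive by blast
  next
    case False
    then have "i \<le> j" using Suc.prems by simp
    then have "cardSuc_iter i r \<le>o cardSuc_iter j r" by (rule Suc.IH)
    moreover have "cardSuc_iter j r \<le>o cardSuc_iter (Suc j) r"
      unfolding iter_Suc using cap_ge[OF iter_Card[OF cr]] .
    ultimately show ?thesis using ordLeq_transitive by blast
  qed
qed




lemma inj_enc: "\<exists>e::real list \<Rightarrow> real set. inj e"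
proof -
  have "inj (of_nat :: nat \<Rightarrow> real)" by (simp add: inj_of_nat)
  then have nr: "|UNIV::nat set| \<le>o |UNIV::real set|"
    using card_of_ordLeq[of "UNIV::nat set" "UNIV::real set"] by blast
  have "|(UNIV::real set) \<times> (UNIV::nat set)| =o |UNIV::real set|"
    by (rule card_of_Times_infinite_simps(1)) (simp_all add: nr infinite_UNIV_char_0)
  then have "|(UNIV::real set) \<times> (UNIV::nat set)| \<le>o |UNIV::real set|"
    using ordIso_iff_ordLeq by blast
  then obtain p :: "real \<times> nat \<Rightarrow> real" where "inj_on p (UNIV \<times> UNIV)"
    using card_of_ordLeq[of "(UNIV::real set) \<times> (UNIV::nat set)" "UNIV::real set"] by blast
  then have ip: "inj p" by simp
  define e where "e xs = p ` {(xs!i, i) | i. i < length xs}" for xs :: "real list"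
  have "inj e"
  proof (rule injI)
    fix xs ys assume exy: "e xs = e ys"
    have S: "{(xs!i, i) | i. i < length xs} = {(ys!i, i) | i. i < length ys}"
      using exy unfolding e_def by (simp add: inj_image_eq_iff[OF ip])
    have l1: "i < length ys" if "i < length xs" for i
    proof -
      have "(xs!i, i) \<in> {(xs!i, i) | i. i < length xs}" using that by blast
      then have "(xs!i, i) \<in> {(ys!i, i) | i. i < length ys}" by (simp only: S)
      then show ?thesis by auto
    qed
    have l2: "i < length xs" if "i < length ys" for i
    proof -
      have "(ys!i, i) \<in> {(ys!i, i) | i. i < length ys}" using that by blast
      then have "(ys!i, i) \<in> {(xs!i, i) | i. i < length xs}" by (simp only: S)
      then show ?thesis by auto
    qed
    have len: "length xs = length ys"
    proof (rule ccontr)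
      assume "length xs \<noteq> length ys"
      then consider "length xs < length ys" | "length ys < length xs" by linarith
      then show False
      proof cases
        case 1
        then show False using l2[of "length xs"] by simp
      next
        case 2
        then show False using l1[of "length ys"] by simp
      qed
    qed
    show "xs = ys"
    proof (rule nth_equalityI[OF len])
      fix i assume i: "i < length xs"
      have "(xs!i, i) \<in> {(xs!i, i) | i. i < length xs}" using i by blast
      then have "(xs!i, i) \<in> {(ys!i, i) | i. i < length ys}" by (simp only: S)
      then show "xs!i = ys!i" by auto
    qed
  qed
  then show ?thesis by blast
qed


lemma proper_exists:
  fixes P :: "'a list set"
  assumes tP: "template d k P" and k: "2 \<le> k"
  shows "\<exists>f::real list \<Rightarrow> real set. proper_coloring (L_edges d P) f"
proof -
  obtain e :: "real list \<Rightarrow> real set" where ie: "inj e" using inj_enc by blast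
  have "proper_coloring (L_edges d P) e"
    unfolding proper_coloring_def
  proof (intro ballI notI)
    fix Q assume Q: "Q \<in> L_edges d P"
    assume "\<exists>c. \<forall>x\<in>Q. e x = c"
    then obtain c where c: "\<forall>x\<in>Q. e x = c" by blast
    have fQ: "finite Q" and cQ: "card Q = card P" using Q by (auto simp: L_edges_def template_def)
    have "card P = k" using tP by (simp add: template_def)
    then have "\<not> card Q \<le> Suc 0" using cQ k by simp
    then obtain x y where "x \<in> Q" "y \<in> Q" "x \<noteq> y" using card_le_Suc0_iff_eq[OF fQ] by blast
    then have "e x = e y" using c by simp
    then show False using \<open>x \<noteq> y\<close> ie by (simp add: inj_eq)
  qed
  then show ?thesis by blast
qed

lemma chrom_is:
  fixes E :: "real list set set" and V :: "real list set"
  assumes ex: "\<exists>f::real list \<Rightarrow> real set. proper_coloring E f"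
  shows "\<exists>f::real list \<Rightarrow> real set. proper_coloring E f \<and> (chromatic_number V E :: real set rel) = |f ` V|"
proof -
  define R where "R = {card_of (f ` V) | f::real list \<Rightarrow> real set. proper_coloring E f}"
  have "R \<noteq> {}" using ex unfolding R_def by blast
  moreover have "\<forall>r\<in>R. Card_order r" unfolding R_def using card_of_Card_order by blast
  ultimately obtain r where r: "r \<in> R" "\<forall>r'\<in>R. r \<le>o r'" using exists_minim_Card_order by blast
  define Pr where "Pr = (\<lambda>r::real set rel. (\<exists>f::real list \<Rightarrow> real set. proper_coloring E f \<and> r = card_of (f ` V)) \<and>
       (\<forall>f::real list \<Rightarrow> real set. proper_coloring E f \<longrightarrow> (r, card_of (f ` V)) \<in> ordLeq))"
  have cn: "(chromatic_number V E :: real set rel) = (SOME r. Pr r)" unfolding chromatic_number_def Pr_def by simp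
  obtain f0 where f0: "proper_coloring E f0" "r = card_of (f0 ` V)" using r(1) unfolding R_def by blast
  have "\<forall>f::real list \<Rightarrow> real set. proper_coloring E f \<longrightarrow> (r, card_of (f ` V)) \<in> ordLeq"
  proof (intro allI impI)
    fix f :: "real list \<Rightarrow> real set" assume "proper_coloring E f"
    then have "card_of (f ` V) \<in> R" unfolding R_def by blast
    then show "(r, card_of (f ` V)) \<in> ordLeq" using r(2) by blast
  qed
  then have "Pr r" using f0 unfolding Pr_def by blast
  then have "Pr (SOME r. Pr r)" by (rule someI)
  then show ?thesis unfolding cn Pr_def by blast
qed



fun Nseq :: "nat \<Rightarrow> nat \<Rightarrow> nat" where
  "Nseq a 0 = a + 1"
| "Nseq a (Suc j) = a * (2 ^ Nseq a j) ^ Suc j + 1"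

lemma Nseq_step: "Nseq a j \<le> Nseq a (Suc j)"
proof (cases "a = 0")
  case True
  then show ?thesis by (cases j) simp_all
next
  case False
  have "Nseq a j < (2::nat) ^ Nseq a j" by (rule less_exp)
  also have "(2::nat) ^ Nseq a j \<le> (2 ^ Nseq a j) ^ Suc j"
  proof -
    have "1 \<le> ((2::nat) ^ Nseq a j) ^ j" by simp
    then show ?thesis by simp
  qed
  also have "\<dots> \<le> a * (2 ^ Nseq a j) ^ Suc j" using False by simp
  finally show ?thesis by simp
qed

lemma Nseq_mono: "i \<le> j \<Longrightarrow> Nseq a i \<le> Nseq a j"
  using lift_Suc_mono_le[of "Nseq a", OF Nseq_step] by blast

lemma finite_case:
  fixes C :: "'c set"
  assumes fC: "finite C"
  shows "\<exists>A::nat \<Rightarrow> real set. \<forall>j. |(C \<times> Wk A (Suc m) j) \<times> {..<m}| <o |A j|"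
proof -
  define a where "a = card C * m"
  define A where "A j = (real :: nat \<Rightarrow> real) ` {..<Nseq a j}" for j
  have cA: "card (A j) = Nseq a j" for j
    unfolding A_def by (simp add: card_image inj_on_def)
  have fA: "finite (A j)" for j unfolding A_def by simp
  have Asub: "A i \<subseteq> A j" if "i \<le> j" for i j
    unfolding A_def using Nseq_mono[OF that, of a] by auto
  have "|(C \<times> Wk A (Suc m) j) \<times> {..<m}| <o |A j|" for j
  proof (cases j)
    case 0
    have W0: "Wk A (Suc m) 0 = {[]}" by (auto simp: Wk_def)
    have c1: "card ((C \<times> Wk A (Suc m) j) \<times> {..<m}) = a"
      unfolding 0 W0 a_def by (simp add: card_cartesian_product)
    have lt: "card ((C \<times> Wk A (Suc m) j) \<times> {..<m}) < card (A j)"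
      using c1 cA[of j] 0 by simp
    have fin: "finite ((C \<times> Wk A (Suc m) j) \<times> {..<m})" unfolding 0 W0 using fC by simp
    show ?thesis by (rule finite_card_ordLess[OF fin fA lt])
  next
    case (Suc i)
    define L where "L = {xs. set xs \<subseteq> Pow (A i) \<and> length xs = Suc i}"
    have fL: "finite L" unfolding L_def using fA by (simp add: finite_lists_length_eq)
    have cL: "card L = (2 ^ Nseq a i) ^ Suc i"
      unfolding L_def using fA cA by (simp add: card_lists_length_eq card_Pow)
    have WL: "Wk A (Suc m) j \<subseteq> L"
    proof
      fix Ss assume Ss: "Ss \<in> Wk A (Suc m) j"
      have "set Ss \<subseteq> Pow (A i)"
      proof
        fix S assume "S \<in> set Ss"
        then obtain l where l: "l < length Ss" "S = Ss ! l" by (auto simp: in_set_conv_nth)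
        then have li: "l < Suc i" using Ss Suc by (simp add: Wk_def)
        then have "S \<subseteq> A l" using Ss Suc l by (simp add: Wk_def)
        moreover have "A l \<subseteq> A i" using li Asub[of l i] by simp
        ultimately show "S \<in> Pow (A i)" by blast
      qed
      then show "Ss \<in> L" using Ss Suc unfolding L_def Wk_def by simp
    qed
    have fW: "finite (Wk A (Suc m) j)" using finite_subset[OF WL fL] .
    have cW: "card (Wk A (Suc m) j) \<le> (2 ^ Nseq a i) ^ Suc i" using card_mono[OF fL WL] cL by simp
    have c1: "card ((C \<times> Wk A (Suc m) j) \<times> {..<m}) = card C * card (Wk A (Suc m) j) * m"
      by (simp add: card_cartesian_product)
    have "card C * card (Wk A (Suc m) j) * m \<le> card C * ((2 ^ Nseq a i) ^ Suc i) * m"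
      using cW by (intro mult_le_mono mult_le_mono2) simp_all
    also have "\<dots> = a * (2 ^ Nseq a i) ^ Suc i" unfolding a_def by (simp add: ac_simps)
    also have "\<dots> < Nseq a j" unfolding Suc by simp
    finally have lt: "card ((C \<times> Wk A (Suc m) j) \<times> {..<m}) < card (A j)" unfolding c1 cA .
    have fin: "finite ((C \<times> Wk A (Suc m) j) \<times> {..<m})" using fC fW by simp
    show ?thesis by (rule finite_card_ordLess[OF fin fA lt])
  qed
  then show ?thesis by blast
qed





lemma infinite_case:
  fixes C :: "real set set" and d m :: nat
  assumes infC: "\<not> finite C" and H: "cardSuc_iter (d-1) |C| <o |Pow (UNIV::nat set)|"
  shows "\<exists>A::nat \<Rightarrow> real set. \<forall>j<d. |(C \<times> Wk A (Suc m) j) \<times> {..<m}| <o |A j|"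
proof -
  define \<kappa> where "\<kappa> j = cardSuc_iter j |C|" for j
  have C\<kappa>: "Card_order (\<kappa> j)" for j unfolding \<kappa>_def by (rule iter_Card[OF card_of_Card_order])
  have \<kappa>0: "\<kappa> 0 = |C|" unfolding \<kappa>_def by (simp add: iter_0)
  have mono: "\<kappa> i \<le>o \<kappa> j" if "i \<le> j" for i j unfolding \<kappa>_def by (rule iter_mono[OF card_of_Card_order that])
  have PR: "|Pow (UNIV::nat set)| =o |UNIV::real set|"
    using nat_sets_eqpoll_reals unfolding eqpoll_iff_card_of_ordIso by simp
  have lt: "\<kappa> j <o |UNIV::real set|" if "j \<le> d-1" for j
  proof -
    have a: "\<kappa> j \<le>o \<kappa> (d-1)" by (rule mono[OF that])
    have b: "\<kappa> (d-1) <o |Pow (UNIV::nat set)|" using H unfolding \<kappa>_def .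
    show ?thesis by (rule ordLess_ordIso_trans[OF ordLeq_ordLess_trans[OF a b] PR])
  qed
  have RR: "|UNIV::real set| <o |UNIV::real set set|" using card_of_Pow[of "UNIV::real set"] by simp
  have notcap: "\<kappa> (Suc j) \<noteq> |UNIV::real set set|" if "j < d-1" for j
  proof
    assume eq: "\<kappa> (Suc j) = |UNIV::real set set|"
    have "\<kappa> (Suc j) <o |UNIV::real set|" using lt that by simp
    then have "|UNIV::real set set| <o |UNIV::real set|" using eq by simp
    then have "|UNIV::real set| <o |UNIV::real set|" by (rule ordLess_transitive[OF RR])
    then show False using ordLess_irreflexive by auto
  qed
  have suc: "cardSuc (\<kappa> j) \<le>o \<kappa> (Suc j)" if "j < d-1" for j
  proof -
    have "\<kappa> (Suc j) = cardSuc_cap (\<kappa> j)" unfolding \<kappa>_def by (simp add: iter_Suc)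
    then show ?thesis using cap_suc[OF C\<kappa>, of j] notcap[OF that] by simp
  qed
  have sucle: "cardSuc (\<kappa> j) \<le>o |UNIV::real set|" if "j < d" for j
  proof -
    have "j \<le> d - 1" using that by simp
    then show ?thesis by (rule cardSuc_least[OF C\<kappa> card_of_Card_order lt])
  qed
  have exB: "\<exists>B::real set. |B| =o cardSuc (\<kappa> j)" if "j < d" for j
  proof -
    have c: "Card_order (cardSuc (\<kappa> j))" using cardSuc_Card_order[OF C\<kappa>] .
    have fi: "|Field (cardSuc (\<kappa> j))| =o cardSuc (\<kappa> j)" using card_of_Field_ordIso[OF c] .
    have "|Field (cardSuc (\<kappa> j))| \<le>o |UNIV::real set|" by (rule ordIso_ordLeq_trans[OF fi sucle[OF that]])
    then have "\<exists>B \<le> (UNIV::real set). |Field (cardSuc (\<kappa> j))| =o |B| \<and> |B| \<le>o |UNIV::real set|"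
      by (rule internalize_card_of_ordLeq2[THEN iffD1])
    then obtain B :: "real set" where B: "|Field (cardSuc (\<kappa> j))| =o |B|" by blast
    have "|B| =o cardSuc (\<kappa> j)" by (rule ordIso_transitive[OF ordIso_symmetric[OF B] fi])
    then show ?thesis by blast
  qed
  define A where "A j = (SOME B::real set. |B| =o cardSuc (\<kappa> j))" for j
  have Aiso: "|A j| =o cardSuc (\<kappa> j)" if "j < d" for j
    unfolding A_def using someI_ex[OF exB[OF that]] .
  have Ale: "|A i| \<le>o \<kappa> j" if "i < j" "j < d" for i j
  proof -
    have "i < d" using that by simp
    then have a: "|A i| \<le>o cardSuc (\<kappa> i)" using Aiso[of i] ordIso_imp_ordLeq by blast
    have "i < d - 1" using that by simp
    then have b: "cardSuc (\<kappa> i) \<le>o \<kappa> (Suc i)" by (rule suc)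
    have "Suc i \<le> j" using that by simp
    then have c: "\<kappa> (Suc i) \<le>o \<kappa> j" by (rule mono)
    show ?thesis by (rule ordLeq_transitive[OF ordLeq_transitive[OF a b] c])
  qed
  have "|(C \<times> Wk A (Suc m) j) \<times> {..<m}| <o |A j|" if j: "j < d" for j
  proof -
    have Cle: "|C| \<le>o \<kappa> j" using mono[of 0 j] \<kappa>0 by simp
    have infK: "\<not> finite (Field (\<kappa> j))"
    proof
      assume fin: "finite (Field (\<kappa> j))"
      have "|C| \<le>o |Field (\<kappa> j)|"
        by (rule ordLeq_ordIso_trans[OF Cle ordIso_symmetric[OF card_of_Field_ordIso[OF C\<kappa>]]])
      then have "finite C" using card_of_ordLeq_finite fin by blast
      then show False using infC by blast
    qed
    define U where "U = (\<Union>i\<in>{..<j}. A i)"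
    have Ule: "|U| \<le>o \<kappa> j" unfolding U_def
    proof (rule card_of_UNION_ordLeq_infinite_Field[OF infK C\<kappa>])
      show "|{..<j}| \<le>o \<kappa> j" by (rule fin_le_inf[OF finite_lessThan infK C\<kappa>])
      show "\<forall>i\<in>{..<j}. |A i| \<le>o \<kappa> j" using Ale j by simp
    qed
    define Lk where "Lk = {ys::real list. length ys = Suc m \<and> set ys \<subseteq> U}"
    have Lkle: "|Lk| \<le>o \<kappa> j" unfolding Lk_def by (rule lists_bound[OF infK C\<kappa> Ule])
    define WL where "WL = {xs. length xs = j \<and> set xs \<subseteq> Lk}"
    have WLle: "|WL| \<le>o \<kappa> j" unfolding WL_def by (rule lists_bound[OF infK C\<kappa> Lkle])
    have "inj_on (map sorted_list_of_set) (Wk A (Suc m) j)"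
    proof (rule inj_onI)
      fix Ss Ts assume Ss: "Ss \<in> Wk A (Suc m) j" and Ts: "Ts \<in> Wk A (Suc m) j"
        and eq: "map sorted_list_of_set Ss = map sorted_list_of_set Ts"
      have lS: "length Ss = j" and lT: "length Ts = j" using Ss Ts by (simp_all add: Wk_def)
      show "Ss = Ts"
      proof (rule nth_equalityI)
        show "length Ss = length Ts" using lS lT by simp
        fix i assume i: "i < length Ss"
        have "map sorted_list_of_set Ss ! i = map sorted_list_of_set Ts ! i" by (simp only: eq)
        then have e: "sorted_list_of_set (Ss!i) = sorted_list_of_set (Ts!i)" using i lS lT by simp
        have "finite (Ss!i)" "finite (Ts!i)" using Ss Ts i lS by (auto simp: Wk_def)
        then have "Ss!i = set (sorted_list_of_set (Ss!i))" "Ts!i = set (sorted_list_of_set (Ts!i))"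
          by simp_all
        then show "Ss!i = Ts!i" using e by simp
      qed
    qed
    moreover have "map sorted_list_of_set ` Wk A (Suc m) j \<subseteq> WL"
    proof
      fix z assume "z \<in> map sorted_list_of_set ` Wk A (Suc m) j"
      then obtain Ss where Ss: "Ss \<in> Wk A (Suc m) j" and z: "z = map sorted_list_of_set Ss" by blast
      have lS: "length Ss = j" using Ss by (simp add: Wk_def)
      have "set z \<subseteq> Lk"
      proof
        fix x assume "x \<in> set z"
        then obtain i where i: "i < j" and x: "x = sorted_list_of_set (Ss!i)"
          using z lS by (auto simp: in_set_conv_nth)
        have p: "Ss!i \<subseteq> A i" "finite (Ss!i)" "card (Ss!i) = Suc m" using Ss i by (auto simp: Wk_def)
        have "A i \<subseteq> U" unfolding U_def using i by blast
        then show "x \<in> Lk" unfolding Lk_def x using p by auto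
      qed
      then show "z \<in> WL" unfolding WL_def using z lS by simp
    qed
    ultimately have "|Wk A (Suc m) j| \<le>o |WL|" using card_of_ordLeq by blast
    then have Wle: "|Wk A (Suc m) j| \<le>o \<kappa> j" using WLle by (rule ordLeq_transitive)
    have P1: "|C \<times> Wk A (Suc m) j| \<le>o \<kappa> j"
      by (rule card_of_Times_ordLeq_infinite_Field[OF infK Cle Wle C\<kappa>])
    have P2: "|(C \<times> Wk A (Suc m) j) \<times> {..<m}| \<le>o \<kappa> j"
      by (rule card_of_Times_ordLeq_infinite_Field[OF infK P1 fin_le_inf[OF finite_lessThan infK C\<kappa>] C\<kappa>])
    have "\<kappa> j <o cardSuc (\<kappa> j)" by (rule cardSuc_greater[OF C\<kappa>])
    moreover have "cardSuc (\<kappa> j) =o |A j|" by (rule ordIso_symmetric[OF Aiso[OF j]])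
    ultimately have "\<kappa> j <o |A j|" by (rule ordLess_ordIso_trans)
    then show ?thesis by (rule ordLeq_ordLess_trans[OF P2])
  qed
  then show ?thesis by blast
qed

lemma main_bound:
  fixes f :: "real list \<Rightarrow> real set" and P :: "'a list set"
  assumes tP: "template d k P" and k2: "2 \<le> k" and pr: "proper_coloring (L_edges d P) f"
  shows "(card_of (Pow (UNIV::nat set)), cardSuc_iter (d - 1) (card_of (f ` Rd d))) \<in> ordLeq"
proof -
  obtain m where k: "k = Suc m" using k2 by (cases k) auto
  have tP': "template d (Suc m) P" using tP k by simp
  show ?thesis
  proof (cases "finite (f ` Rd d)")
    case True
    obtain A :: "nat \<Rightarrow> real set" where "\<forall>j. |(f ` Rd d \<times> Wk A (Suc m) j) \<times> {..<m}| <o |A j|"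
      using finite_case[OF True] by blast
    then have False using no_good_A[OF tP' pr] by blast
    then show ?thesis ..
  next
    case False
    show ?thesis
    proof (rule ccontr)
      assume nle: "\<not> ?thesis"
      have w1: "Well_order |Pow (UNIV::nat set)|" by (rule card_of_Well_order)
      have w2: "Well_order (cardSuc_iter (d-1) (card_of (f ` Rd d)))"
        using iter_Card[OF card_of_Card_order] card_order_on_well_order_on by blast
      have H: "cardSuc_iter (d-1) (card_of (f ` Rd d)) <o |Pow (UNIV::nat set)|"
        using nle not_ordLeq_iff_ordLess[OF w2 w1] by blast
      obtain A :: "nat \<Rightarrow> real set" where "\<forall>j<d. |(f ` Rd d \<times> Wk A (Suc m) j) \<times> {..<m}| <o |A j|"
        using infinite_case[OF False H] by blast
      then show False using no_good_A[OF tP' pr] by blast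
    qed
  qed
qed

theorem corollary1p3:
  fixes d k :: nat and P :: "'a list set"
  assumes "1 \<le> d" and "2 \<le> k" and "template d k P"
  shows "(card_of (Pow (UNIV :: nat set)),
           cardSuc_iter (d - 1) (chromatic_number (Rd d) (L_edges d P) :: real set rel))
         \<in> ordLeq"
proof -
  obtain f :: "real list \<Rightarrow> real set" where f: "proper_coloring (L_edges d P) f"
    "(chromatic_number (Rd d) (L_edges d P) :: real set rel) = |f ` Rd d|"
    using chrom_is[OF proper_exists[OF assms(3,2)], of "Rd d"] by blast
  show ?thesis unfolding f(2) using main_bound[OF assms(3,2) f(1)] .
qed


end
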